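(* Let $U$ and $V$ be finite-dimensional vector spaces over a field $\mathbb{K}$, and let $\mathcal{S}$ be a linear subspace of $\mathcal{L}(U,V)$ with $\operatorname{codim}_{\mathcal{L}(U,V)}\mathcal{S}\leq \dim V-2$. Then every range-compatible group homomorphism $F:(\mathcal{S},+)\to(V,+)$ is local, i.e. there exists $x\in U$ such that $F(s)=s(x)$ for all $s\in\mathcal{S}$.
   Context: $\mathcal{L}(U,V)$ is the space of linear maps from $U$ to $V$. For a subset $\mathcal{S}$ of $\mathcal{L}(U,V)$, a map $F:\mathcal{S}\to V$ is range-compatible when $F(s)\in\operatorname{im}s$ for all $s\in\mathcal{S}$; it is local when there exists $x\in U$ with $F(s)=s(x)$ for all $s\in\mathcal{S}$. *)

theory Defs
  imports Complex_Main "HOL-Library.Function_Algebras"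
begin

definition fun_scale :: "('k::field \<Rightarrow> 'v::ab_group_add \<Rightarrow> 'v) \<Rightarrow> 'k \<Rightarrow> ('u \<Rightarrow> 'v) \<Rightarrow> ('u \<Rightarrow> 'v)"
  where "fun_scale scaleV c f = (\<lambda>x. scaleV c (f x))"

definition lin_maps :: "('k::field \<Rightarrow> 'u::ab_group_add \<Rightarrow> 'u) \<Rightarrow> ('k \<Rightarrow> 'v::ab_group_add \<Rightarrow> 'v) \<Rightarrow> ('u \<Rightarrow> 'v) set"
  where "lin_maps scaleU scaleV = {f. Vector_Spaces.linear scaleU scaleV f}"

definition range_compatible :: "('u \<Rightarrow> 'v) set \<Rightarrow> (('u \<Rightarrow> 'v) \<Rightarrow> 'v) \<Rightarrow> bool"
  where "range_compatible S F \<longleftrightarrow> (\<forall>s\<in>S. F s \<in> range s)"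

definition is_local :: "('u \<Rightarrow> 'v) set \<Rightarrow> (('u \<Rightarrow> 'v) \<Rightarrow> 'v) \<Rightarrow> bool"
  where "is_local S F \<longleftrightarrow> (\<exists>x. \<forall>s\<in>S. F s = s x)"

definition additive_on :: "('u \<Rightarrow> 'v::plus) set \<Rightarrow> (('u \<Rightarrow> 'v) \<Rightarrow> 'v) \<Rightarrow> bool"
  where "additive_on S F \<longleftrightarrow> (\<forall>s\<in>S. \<forall>t\<in>S. F (s + t) = F s + F t)"

end

theory Submission
  imports Defs
begin

context vector_space begin

lemma fd_basis:
  assumes "finite B0" "A \<subseteq> span B0"
  obtains B where "finite B" "independent B" "B \<subseteq> A" "A \<subseteq> span B" "card B = dim A"
proof -
  obtain B where B: "B \<subseteq> A" "independent B" "A \<subseteq> span B" "card B = dim A" by (rule basis_exists)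
  have "finite B" using independent_span_bound[OF assms(1) B(2)] B(1) assms(2) by blast
  with B show ?thesis using that by blast
qed

lemma dim_mono_fd:
  assumes "A \<subseteq> C" "finite B0" "C \<subseteq> span B0"
  shows "dim A \<le> dim C"
proof -
  obtain BC where BC: "finite BC" "independent BC" "BC \<subseteq> C" "C \<subseteq> span BC" "card BC = dim C"
    using fd_basis[OF assms(2,3)] by blast
  obtain BA where BA: "BA \<subseteq> A" "independent BA" "A \<subseteq> span BA" "card BA = dim A" by (rule basis_exists)
  have "card BA \<le> card BC" using independent_span_bound[OF BC(1) BA(2)] BA(1) assms(1) BC(4) by blast
  thus ?thesis using BA BC by simp
qed

lemma dim_le_0: "A \<subseteq> {0} \<Longrightarrow> dim A = 0"
  using dim_le_card[of A "{}"] by simp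

lemma dim_insert_fd:
  assumes "subspace A" "finite B0" "A \<subseteq> span B0" "x \<notin> A"
  shows "dim (span (insert x A)) = dim A + 1"
proof -
  obtain B where B: "finite B" "independent B" "B \<subseteq> A" "A \<subseteq> span B" "card B = dim A"
    using fd_basis[OF assms(2,3)] by blast
  have spB: "span B = A" using B(3,4) assms(1) span_subspace by blast
  have xB: "x \<notin> span B" using spB assms(4) by simp
  have ind: "independent (insert x B)" using independent_insertI[OF xB B(2)] .
  have "span (insert x A) \<subseteq> span (insert x B)"
  proof (rule span_minimal)
    show "insert x A \<subseteq> span (insert x B)"
      using spB span_mono[of B "insert x B"] span_base[of x "insert x B"] by auto
  qed simp
  moreover have "span (insert x B) \<subseteq> span (insert x A)"
    using B(3) by (intro span_mono) auto
  ultimately have eq: "span (insert x B) = span (span (insert x A))" by (simp add: span_span)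
  have "dim (span (insert x A)) = card (insert x B)" using dim_eq_card[OF eq ind] .
  also have "\<dots> = card B + 1" using B(1,3) assms(4) by (subst card_insert_disjoint) auto
  finally show ?thesis using B(5) by simp
qed

end

lemma vs_fun: "vector_space s \<Longrightarrow> vector_space (fun_scale s)"
  unfolding vector_space_def fun_scale_def by (auto simp: fun_eq_iff)

lemma (in vector_space_pair) rn_le:
  assumes lf: "Vector_Spaces.linear s1 s2 f" and A: "vs1.subspace A" and fin: "finite B0" "A \<subseteq> vs1.span B0"
  shows "vs1.dim A \<le> vs1.dim (A \<inter> {x. f x = 0}) + vs2.dim (f ` A)"
proof -
  let ?K = "A \<inter> {x. f x = 0}"
  obtain C where C: "finite C" "vs1.independent C" "C \<subseteq> ?K" "?K \<subseteq> vs1.span C" "card C = vs1.dim ?K"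
    using vs1.fd_basis[OF fin(1), of ?K] fin(2) by blast
  have fA: "f ` A \<subseteq> vs2.span (f ` B0)"
    using fin(2) linear_span_image[OF lf, of B0] by auto
  obtain G where G: "finite G" "vs2.independent G" "G \<subseteq> f ` A" "f ` A \<subseteq> vs2.span G" "card G = vs2.dim (f ` A)"
    using vs2.fd_basis[OF _ fA] fin(1) by blast
  define h where "h g = (SOME a. a \<in> A \<and> f a = g)" for g
  have h: "h g \<in> A \<and> f (h g) = g" if "g \<in> G" for g
    unfolding h_def by (rule someI_ex) (use that G(3) in auto)
  define E where "E = h ` G"
  have EA: "E \<subseteq> A" using h by (auto simp: E_def)
  have fE: "f ` E = G" using h by (force simp: E_def image_image)
  have cE: "card E \<le> card G" unfolding E_def by (rule card_image_le[OF G(1)])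
  have "A \<subseteq> vs1.span (C \<union> E)"
  proof
    fix a assume a: "a \<in> A"
    have "f a \<in> vs2.span G" using G(4) a by auto
    hence "f a \<in> f ` vs1.span E" using linear_span_image[OF lf, of E] fE by simp
    then obtain e where e: "e \<in> vs1.span E" "f a = f e" by auto
    have eA: "e \<in> A" using e(1) vs1.span_minimal[OF EA A] by auto
    have "a - e \<in> ?K" using a eA e(2) A vs1.subspace_diff linear_diff[OF lf] by auto
    hence "a - e \<in> vs1.span (C \<union> E)" using C(4) vs1.span_mono[of C "C \<union> E"] by auto
    moreover have "e \<in> vs1.span (C \<union> E)" using e(1) vs1.span_mono[of E "C \<union> E"] by auto
    ultimately have "(a - e) + e \<in> vs1.span (C \<union> E)" by (rule vs1.span_add)
    thus "a \<in> vs1.span (C \<union> E)" by simp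
  qed
  hence "vs1.dim A \<le> card (C \<union> E)" using vs1.dim_le_card C(1) G(1) E_def by auto
  also have "\<dots> \<le> card C + card E" by (rule card_Un_le)
  finally show ?thesis using C(5) G(5) cE by simp
qed


lemma (in vector_space_pair) count_le:
  assumes "finite I"
  shows "(\<forall>i\<in>I. Vector_Spaces.linear s1 s2 (\<Phi> i)) \<Longrightarrow> vs1.subspace A \<Longrightarrow> finite B0 \<Longrightarrow>
    A \<subseteq> vs1.span B0 \<Longrightarrow> (\<forall>x\<in>A. (\<forall>i\<in>I. \<Phi> i x = 0) \<longrightarrow> x = 0) \<Longrightarrow>
    vs1.dim A \<le> (\<Sum>i\<in>I. vs2.dim (\<Phi> i ` A))"
  using assms
proof (induction I arbitrary: A rule: finite_induct)
  case empty
  then have "A \<subseteq> {0}" by auto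
  then show ?case using vs1.dim_le_0 by simp
next
  case (insert i I A)
  let ?K = "A \<inter> {x. \<Phi> i x = 0}"
  have lin: "Vector_Spaces.linear s1 s2 (\<Phi> i)" using insert.prems(1) by simp
  have Ks: "vs1.subspace ?K"
    using vs1.subspace_inter[OF insert.prems(2) linear_subspace_kernel[OF lin]] .
  have "vs1.dim ?K \<le> (\<Sum>j\<in>I. vs2.dim (\<Phi> j ` ?K))"
    by (rule insert.IH) (use insert.prems Ks in auto)
  also have "\<dots> \<le> (\<Sum>j\<in>I. vs2.dim (\<Phi> j ` A))"
  proof (rule sum_mono)
    fix j assume j: "j \<in> I"
    have linj: "Vector_Spaces.linear s1 s2 (\<Phi> j)" using insert.prems(1) j by simp
    have "\<Phi> j ` A \<subseteq> vs2.span (\<Phi> j ` B0)"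
      using insert.prems(4) linear_span_image[OF linj, of B0] by auto
    then show "vs2.dim (\<Phi> j ` ?K) \<le> vs2.dim (\<Phi> j ` A)"
      by (intro vs2.dim_mono_fd[of _ _ "\<Phi> j ` B0"]) (use insert.prems(3) in auto)
  qed
  finally have "vs1.dim ?K \<le> (\<Sum>j\<in>I. vs2.dim (\<Phi> j ` A))" .
  moreover have "vs1.dim A \<le> vs1.dim ?K + vs2.dim (\<Phi> i ` A)"
    by (rule rn_le[OF lin insert.prems(2,3,4)])
  ultimately show ?case using insert.hyps by simp
qed

lemma dimD:
  fixes sU :: "'k::field \<Rightarrow> 'u::ab_group_add \<Rightarrow> 'u" and sW :: "'k \<Rightarrow> 'w::ab_group_add \<Rightarrow> 'w"
  assumes U: "finite_dimensional_vector_space sU BU" and W: "finite_dimensional_vector_space sW BW"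
    and Z: "module.subspace sU Z" and A: "module.subspace (fun_scale sW) A"
    and lin: "\<forall>f\<in>A. Vector_Spaces.linear sU sW f \<and> (\<forall>z\<in>Z. f z = 0)"
    and fin: "finite B0" "A \<subseteq> module.span (fun_scale sW) B0"
  shows "vector_space.dim (fun_scale sW) A \<le>
     (vector_space.dim sU UNIV - vector_space.dim sU Z) * vector_space.dim sW UNIV"
proof -
  interpret U: finite_dimensional_vector_space sU BU by fact
  interpret W: finite_dimensional_vector_space sW BW by fact
  interpret FW: vector_space "fun_scale sW" using vs_fun W.vector_space_axioms .
  interpret P: vector_space_pair "fun_scale sW" sW ..
  interpret UW: vector_space_pair sU sW ..
  have ev: "Vector_Spaces.linear (fun_scale sW) sW (\<lambda>f. f x)" for x
    unfolding Vector_Spaces.linear_iff using FW.vector_space_axioms W.vector_space_axioms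
    by (simp add: fun_scale_def)
  have dimU: "U.dim Y \<le> U.dim UNIV" for Y
    using U.dim_subset_UNIV U.dim_UNIV U.dimension_def by simp
  { fix N
    have "\<forall>Z A. U.dim UNIV - U.dim Z = N \<longrightarrow> U.subspace Z \<longrightarrow> FW.subspace A \<longrightarrow>
        (\<forall>f\<in>A. Vector_Spaces.linear sU sW f \<and> (\<forall>z\<in>Z. f z = 0)) \<longrightarrow> A \<subseteq> FW.span B0 \<longrightarrow>
        FW.dim A \<le> (U.dim UNIV - U.dim Z) * W.dim UNIV"
    proof (induction N rule: less_induct)
      case (less N)
      show ?case
      proof (intro allI impI)
        fix Z A
        assume N: "U.dim UNIV - U.dim Z = N" and Zs: "U.subspace Z" and As: "FW.subspace A"
          and lA: "\<forall>f\<in>A. Vector_Spaces.linear sU sW f \<and> (\<forall>z\<in>Z. f z = 0)"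
          and AB: "A \<subseteq> FW.span B0"
        show "FW.dim A \<le> (U.dim UNIV - U.dim Z) * W.dim UNIV"
        proof (cases "Z = UNIV")
          case True
          have "A \<subseteq> {0}"
          proof
            fix f assume "f \<in> A"
            then have "f z = 0" for z using lA True by auto
            then show "f \<in> {0}" by auto
          qed
          then show ?thesis using FW.dim_le_0[of A] by simp
        next
          case False
          then obtain x0 where x0: "x0 \<notin> Z" by auto
          define Z' where "Z' = U.span (insert x0 Z)"
          have spZ: "U.span Z = Z" using Zs by simp
          have x0s: "x0 \<notin> U.span Z" using x0 spZ by blast
          have dZ': "U.dim Z' = U.dim Z + 1"
            unfolding Z'_def U.dim_span U.dim_insert using x0s by simp
          have lt: "U.dim UNIV - U.dim Z' < N" using dZ' dimU[of Z'] N by linarith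
          let ?A' = "A \<inter> {f. f x0 = 0}"
          have A's: "FW.subspace ?A'"
            using FW.subspace_inter[OF As P.linear_subspace_kernel[OF ev[of x0]]] by simp
          have lA': "\<forall>f\<in>?A'. Vector_Spaces.linear sU sW f \<and> (\<forall>z\<in>Z'. f z = 0)"
          proof (intro ballI conjI)
            fix f assume f: "f \<in> ?A'"
            show "Vector_Spaces.linear sU sW f" using f lA by auto
          next
            fix f z assume f: "f \<in> ?A'" and z: "z \<in> Z'"
            have lf: "Vector_Spaces.linear sU sW f" using f lA by auto
            show "f z = 0"
              by (rule UW.linear_eq_0_on_span[OF lf _ z[unfolded Z'_def]]) (use f lA in auto)
          qed
          have IH: "FW.dim ?A' \<le> (U.dim UNIV - U.dim Z') * W.dim UNIV"
          proof -
            have Z's: "U.subspace Z'" unfolding Z'_def by simp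
            have "?A' \<subseteq> FW.span B0" using AB by auto
            then show ?thesis using less.IH[OF lt] Z's A's lA' by blast
          qed
          have "FW.dim A \<le> FW.dim ?A' + W.dim ((\<lambda>f. f x0) ` A)"
            using P.rn_le[OF ev As fin(1) AB] by simp
          also have "W.dim ((\<lambda>f. f x0) ` A) \<le> W.dim (UNIV :: 'w set)"
            by (rule W.dim_subset) simp
          finally have "FW.dim A \<le> (U.dim UNIV - U.dim Z') * W.dim UNIV + W.dim UNIV"
            using IH by linarith
          also have "\<dots> = (U.dim UNIV - U.dim Z) * W.dim UNIV"
          proof -
            have "U.dim UNIV - U.dim Z = Suc (U.dim UNIV - U.dim Z')" using dZ' dimU[of Z'] by simp
            then show ?thesis by simp
          qed
          finally show ?thesis .
        qed
      qed
    qed }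
  then show ?thesis using Z A lin fin by blast
qed


context vector_space begin

lemma indep2_trans:
  assumes a: "a \<noteq> 0" and nap: "\<not> (\<forall>c d. c *s a + d *s p = 0 \<longrightarrow> c = 0 \<and> d = 0)"
    and pq: "\<forall>c d. c *s p + d *s q = 0 \<longrightarrow> c = 0 \<and> d = 0"
  shows "\<forall>c d. c *s a + d *s q = 0 \<longrightarrow> c = 0 \<and> d = 0"
proof (intro allI impI)
  fix d1 d2 assume d: "d1 *s a + d2 *s q = 0"
  obtain c1 c2 where c: "c1 *s a + c2 *s p = 0" "c1 \<noteq> 0 \<or> c2 \<noteq> 0" using nap by blast
  have p0: "p \<noteq> 0" using pq[rule_format, of 1 0] by auto
  have c1: "c1 \<noteq> 0"
  proof
    assume "c1 = 0"
    then have "c2 *s p = 0" "c2 \<noteq> 0" using c by auto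
    then show False using p0 by simp
  qed
  have "c1 *s a = - (c2 *s p)" using c(1) by (simp add: eq_neg_iff_add_eq_0)
  then have "(1/c1) *s (c1 *s a) = (1/c1) *s (- (c2 *s p))" by simp
  then have aeq: "a = (- c2 / c1) *s p" using c1 by simp
  have "(d1 * (- c2 / c1)) *s p + d2 *s q = 0" using d aeq by simp
  then have "d1 * (- c2 / c1) = 0" "d2 = 0" using pq by blast+
  then have "d1 = 0 \<or> c2 = 0" using c1 by simp
  moreover have "c2 = 0 \<Longrightarrow> False" using aeq a by simp
  ultimately show "d1 = 0 \<and> d2 = 0" using \<open>d2 = 0\<close> by blast
qed

lemma indep2_of_independent:
  assumes "independent {a, b}" "a \<noteq> b"
  shows "\<forall>c d. c *s a + d *s b = 0 \<longrightarrow> c = 0 \<and> d = 0"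
proof (intro allI impI)
  fix c d assume cd: "c *s a + d *s b = 0"
  define u where "u x = (if x = a then c else d)" for x
  have "(\<Sum>x\<in>{a, b}. u x *s x) = u a *s a + u b *s b"
    using assms(2) by (simp add: sum.insert)
  also have "\<dots> = 0" using cd assms(2) by (simp add: u_def)
  finally have s0: "(\<Sum>x\<in>{a, b}. u x *s x) = 0" .
  have "\<forall>S \<subseteq> {a,b}. finite S \<longrightarrow> (\<forall>u. (\<Sum>v\<in>S. u v *s v) = 0 \<longrightarrow> (\<forall>v\<in>S. u v = 0))"
    using assms(1) unfolding independent_explicit_finite_subsets .
  then have "\<forall>v\<in>{a,b}. u v = 0" using s0 by (meson finite.emptyI finite.insertI order_refl)
  then show "c = 0 \<and> d = 0" using assms(2) by (auto simp: u_def)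
qed

lemma indep2_coeff:
  assumes ab: "\<forall>c d. c *s a + d *s b = 0 \<longrightarrow> c = 0 \<and> d = 0"
    and eq: "g *s (a + b) = \<alpha> *s a + \<beta> *s b"
  shows "\<alpha> = \<beta>"
proof -
  have "(g - \<alpha>) *s a + (g - \<beta>) *s b = 0"
    using eq by (simp add: algebra_simps)
  then have "g - \<alpha> = 0" "g - \<beta> = 0" using ab by blast+
  then show ?thesis by simp
qed

end

lemma fdK: "finite_dimensional_vector_space ((*) :: 'k::field \<Rightarrow> 'k \<Rightarrow> 'k) {1}"
proof -
  interpret K: vector_space "(*) :: 'k \<Rightarrow> 'k \<Rightarrow> 'k" by unfold_locales (auto simp: algebra_simps)
  show ?thesis
  proof (unfold_locales)
    show "finite {1::'k}" by simp
    show "K.independent {1::'k}" by simp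
    have "K.span {1::'k} = range (\<lambda>k. k * 1)" by (rule K.span_singleton)
    then show "K.span {1::'k} = UNIV" by auto
  qed
qed

lemma dimK: "vector_space.dim ((*) :: 'k::field \<Rightarrow> 'k \<Rightarrow> 'k) UNIV = 1"
proof -
  interpret K: finite_dimensional_vector_space "(*) :: 'k \<Rightarrow> 'k \<Rightarrow> 'k" "{1}" by (rule fdK)
  show ?thesis using K.dim_UNIV by simp
qed

lemma sub_lin:
  assumes "vector_space sU" "vector_space sW"
  shows "module.subspace (fun_scale sW) {f. Vector_Spaces.linear sU sW f \<and> (\<forall>z\<in>Z. f z = 0)}"
proof -
  interpret U: vector_space sU by fact
  interpret W: vector_space sW by fact
  interpret FW: vector_space "fun_scale sW" using vs_fun assms(2) .
  show ?thesis
    unfolding FW.subspace_def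
  proof (intro conjI ballI allI)
    show "0 \<in> {f. Vector_Spaces.linear sU sW f \<and> (\<forall>z\<in>Z. f z = 0)}"
      using assms by (simp add: Vector_Spaces.linear_iff)
  next
    fix f g assume f: "f \<in> {f. Vector_Spaces.linear sU sW f \<and> (\<forall>z\<in>Z. f z = 0)}"
      and g: "g \<in> {f. Vector_Spaces.linear sU sW f \<and> (\<forall>z\<in>Z. f z = 0)}"
    then show "f + g \<in> {f. Vector_Spaces.linear sU sW f \<and> (\<forall>z\<in>Z. f z = 0)}"
      using assms by (auto simp: Vector_Spaces.linear_iff W.scale_right_distrib)
  next
    fix c f assume f: "f \<in> {f. Vector_Spaces.linear sU sW f \<and> (\<forall>z\<in>Z. f z = 0)}"
    then show "fun_scale sW c f \<in> {f. Vector_Spaces.linear sU sW f \<and> (\<forall>z\<in>Z. f z = 0)}"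
      using assms by (auto simp: Vector_Spaces.linear_iff fun_scale_def W.scale_right_distrib mult.commute)
  qed
qed

lemma lin_comp:
  assumes "vector_space sV" "vector_space sK" "Vector_Spaces.linear sV sK \<psi>"
  shows "Vector_Spaces.linear (fun_scale sV) (fun_scale sK) (\<lambda>t u. \<psi> (t u))"
proof -
  interpret V: vector_space sV by fact
  interpret K: vector_space sK by fact
  interpret L: Vector_Spaces.linear sV sK \<psi> by fact
  show ?thesis
    unfolding Vector_Spaces.linear_iff
    using vs_fun[OF assms(1)] vs_fun[OF assms(2)]
    by (auto simp: fun_scale_def L.add L.scale fun_eq_iff)
qed


lemma GT:
  fixes sU :: "'k::field \<Rightarrow> 'u::ab_group_add \<Rightarrow> 'u" and sV :: "'k \<Rightarrow> 'v::ab_group_add \<Rightarrow> 'v"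
    and F :: "('u \<Rightarrow> 'v) \<Rightarrow> 'v"
  assumes U: "finite_dimensional_vector_space sU BU" and V: "finite_dimensional_vector_space sV BV"
    and Z: "module.subspace sU Z" and S: "module.subspace (fun_scale sV) S"
    and lin: "\<forall>s\<in>S. Vector_Spaces.linear sU sV s \<and> (\<forall>z\<in>Z. s z = 0)"
    and fin: "finite B0" "S \<subseteq> module.span (fun_scale sV) B0"
    and codim: "(vector_space.dim sU UNIV - vector_space.dim sU Z) * vector_space.dim sV UNIV + 2
       \<le> vector_space.dim (fun_scale sV) S + vector_space.dim sV UNIV"
    and add: "additive_on S F" and rc: "range_compatible S F"
  shows "is_local S F"
proof -
  interpret U: finite_dimensional_vector_space sU BU by fact
  interpret V: finite_dimensional_vector_space sV BV by fact
  interpret FV: vector_space "fun_scale sV" using vs_fun V.vector_space_axioms .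
  interpret K: finite_dimensional_vector_space "(*) :: 'k \<Rightarrow> 'k \<Rightarrow> 'k" "{1}" by (rule fdK)
  interpret FK: vector_space "fun_scale ((*) :: 'k \<Rightarrow> 'k \<Rightarrow> 'k)" using vs_fun K.vector_space_axioms .
  interpret P: vector_space_pair "fun_scale sV" sV ..
  interpret UV: vector_space_pair sU sV ..
  interpret UK: vector_space_pair sU "(*) :: 'k \<Rightarrow> 'k \<Rightarrow> 'k" ..
  interpret VK: vector_space_pair sV "(*) :: 'k \<Rightarrow> 'k \<Rightarrow> 'k" ..
  interpret P2: vector_space_pair "fun_scale sV" "fun_scale ((*) :: 'k \<Rightarrow> 'k \<Rightarrow> 'k)" ..
  have ev: "Vector_Spaces.linear (fun_scale sV) sV (\<lambda>f. f x)" for x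
    unfolding Vector_Spaces.linear_iff using FV.vector_space_axioms V.vector_space_axioms
    by (simp add: fun_scale_def)
  have dimU: "U.dim Y \<le> U.dim UNIV" for Y
    using U.dim_subset_UNIV U.dim_UNIV U.dimension_def by simp
  define ind2 where "ind2 a b \<longleftrightarrow> (\<forall>c d. sV c a + sV d b = 0 \<longrightarrow> c = 0 \<and> d = 0)" for a b
  { fix N
    have "\<forall>Z S. U.dim UNIV - U.dim Z = N \<longrightarrow> U.subspace Z \<longrightarrow> FV.subspace S \<longrightarrow>
        (\<forall>s\<in>S. Vector_Spaces.linear sU sV s \<and> (\<forall>z\<in>Z. s z = 0)) \<longrightarrow> S \<subseteq> FV.span B0 \<longrightarrow>
        (U.dim UNIV - U.dim Z) * V.dim UNIV + 2 \<le> FV.dim S + V.dim UNIV \<longrightarrow>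
        additive_on S F \<longrightarrow> range_compatible S F \<longrightarrow> is_local S F"
    proof (induction N rule: less_induct)
      case (less N)
      show ?case
      proof (intro allI impI)
        fix Z S
        assume N: "U.dim UNIV - U.dim Z = N" and Zs: "U.subspace Z" and Ss: "FV.subspace S"
          and lS: "\<forall>s\<in>S. Vector_Spaces.linear sU sV s \<and> (\<forall>z\<in>Z. s z = 0)"
          and SB: "S \<subseteq> FV.span B0"
          and cd: "(U.dim UNIV - U.dim Z) * V.dim UNIV + 2 \<le> FV.dim S + V.dim UNIV"
          and ad: "additive_on S F" and rc: "range_compatible S F"
        show "is_local S F"
        proof (cases "Z = UNIV")
          case True
          have "\<forall>s\<in>S. F s = s 0"
          proof
            fix s assume s: "s \<in> S"
            then have "s z = 0" for z using lS True by auto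
            moreover have "F s \<in> range s" using rc s unfolding range_compatible_def by auto
            ultimately show "F s = s 0" by auto
          qed
          then show ?thesis unfolding is_local_def by blast
        next
          case False
          then obtain x0 where x0: "x0 \<notin> Z" by auto
          define Z' where "Z' = U.span (insert x0 Z)"
          have spZ: "U.span Z = Z" using Zs by simp
          have x0s: "x0 \<notin> U.span Z" using x0 spZ by blast
          have dZ': "U.dim Z' = U.dim Z + 1"
            unfolding Z'_def U.dim_span U.dim_insert using x0s by simp
          have Z's: "U.subspace Z'" unfolding Z'_def by simp
          define n' where "n' = U.dim UNIV - U.dim Z'"
          have nn': "U.dim UNIV - U.dim Z = Suc n'" using dZ' dimU[of Z'] unfolding n'_def by simp
          have lt: "n' < N" using nn' N by simp
          define m where "m = V.dim (UNIV :: 'v set)"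
          define S' where "S' = S \<inter> {s. s x0 = 0}"
          have S's: "FV.subspace S'"
            using FV.subspace_inter[OF Ss P.linear_subspace_kernel[OF ev[of x0]]] unfolding S'_def by simp
          have lS': "\<forall>s\<in>S'. Vector_Spaces.linear sU sV s \<and> (\<forall>z\<in>Z'. s z = 0)"
          proof (intro ballI conjI)
            fix f assume f: "f \<in> S'"
            show "Vector_Spaces.linear sU sV f" using f lS S'_def by auto
          next
            fix f z assume f: "f \<in> S'" and z: "z \<in> Z'"
            have lf: "Vector_Spaces.linear sU sV f" using f lS S'_def by auto
            show "f z = 0"
              by (rule UV.linear_eq_0_on_span[OF lf _ z[unfolded Z'_def]]) (use f lS S'_def in auto)
          qed
          have S'B: "S' \<subseteq> FV.span B0" using SB S'_def by auto
          define W where "W = (\<lambda>s. s x0) ` S"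
          have rnS: "FV.dim S \<le> FV.dim S' + V.dim W"
            using P.rn_le[OF ev Ss fin(1) SB] unfolding S'_def W_def by simp
          have dW: "V.dim W \<le> m" unfolding m_def by (rule V.dim_subset) simp
          have DS': "FV.dim S' \<le> n' * m"
            using dimD[OF U V Z's S's _ fin(1) S'B] lS' unfolding n'_def m_def by blast
          have cd': "(Suc n') * m + 2 \<le> FV.dim S + m" using cd nn' m_def by simp
          have cdS': "n' * m + 2 \<le> FV.dim S' + m" using cd' rnS dW by simp
          have dW2: "2 \<le> V.dim W" using cd' rnS DS' by simp
          have "is_local S' F"
          proof -
            have adS': "additive_on S' F" using ad unfolding additive_on_def S'_def by auto
            have rcS': "range_compatible S' F" using rc unfolding range_compatible_def S'_def by auto
            show ?thesis
              using less.IH[OF lt] Z's S's lS' S'B cdS' adS' rcS' unfolding n'_def m_def by blast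
          qed
          then obtain x' where x': "\<forall>s\<in>S'. F s = s x'" unfolding is_local_def by blast
          define H where "H s = F s - s x'" for s
          have H0: "\<forall>s\<in>S'. H s = 0" using x' H_def by simp
          have Hadd: "H (s + t) = H s + H t" if "s \<in> S" "t \<in> S" for s t
            using ad that unfolding additive_on_def H_def by (simp add: algebra_simps)
          have Hrc: "H s \<in> range s" if s: "s \<in> S" for s
          proof -
            obtain y where "F s = s y" using rc s unfolding range_compatible_def by auto
            moreover have "s (y - x') = s y - s x'" using UV.linear_diff lS s by blast
            ultimately show ?thesis unfolding H_def by (metis rangeI)
          qed
          have Hconst0: "s - t \<in> S" if "s \<in> S" "t \<in> S" for s t
            using FV.subspace_diff Ss that by blast
          have L: "\<exists>c. H s = sV c (s x0)" if s: "s \<in> S" for s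
          proof (cases "s x0 = 0")
            case True
            then have "H s = 0" using H0 s S'_def by auto
            then show ?thesis using True by (intro exI[of _ 0]) simp
          next
            case False
            define w where "w = s x0"
            define v where "v = H s"
            show ?thesis
            proof (rule ccontr)
              assume nc: "\<not> (\<exists>c. H s = sV c (s x0))"
              have w0: "w \<noteq> 0" using False w_def by simp
              have vw: "v \<notin> V.span {w}" using nc unfolding V.span_singleton v_def w_def by auto
              have vnw: "v \<noteq> w"
              proof
                assume "v = w"
                then show False using vw V.span_base[of w "{w}"] by simp
              qed
              have iw: "V.independent {w}" using w0 by simp
              have ind: "V.independent {v, w}" using V.independent_insertI[OF vw iw] .
              obtain BB where BB: "{v,w} \<subseteq> BB" "BB \<subseteq> UNIV" "V.independent BB" "UNIV \<subseteq> V.span BB"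
                by (rule V.maximal_independent_subset_extend[OF subset_UNIV ind])
              have fBB: "finite BB" using V.finiteI_independent BB(3) .
              have cBB: "card BB = m" unfolding m_def using V.basis_card_eq_dim[of BB UNIV] BB by simp
              have spBB: "V.span BB = UNIV" using BB(4) by auto
              define c where "c b y = V.representation BB y b" for b y
              have lc: "Vector_Spaces.linear sV (*) (c b)" for b
                unfolding c_def using V.linear_representation[OF BB(3) spBB] .
              have cbas: "c b x = (if b = x then 1 else 0)" if "x \<in> BB" for b x
                unfolding c_def using V.representation_basis[OF BB(3) that] by simp
              define \<psi> where "\<psi> b y = c b y + (if b = v \<or> b = w then 0 else c v y)" for b y
              have l\<psi>: "Vector_Spaces.linear sV (*) (\<psi> b)" for b
              proof (cases "b = v \<or> b = w")
                case True then have "\<psi> b = c b" unfolding \<psi>_def by auto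
                then show ?thesis using lc by simp
              next
                case False then have "\<psi> b = (\<lambda>y. c b y + c v y)" unfolding \<psi>_def by auto
                then show ?thesis using VK.linear_compose_add[OF lc lc] by simp
              qed
              have vin: "v \<in> BB" "w \<in> BB" using BB(1) by auto
              have \<psi>w: "\<psi> b w = 0" if "b \<noteq> w" for b
                using that vnw cbas[OF vin(2)] unfolding \<psi>_def by auto
              have \<psi>v: "\<psi> b v = 1" if "b \<noteq> w" for b
                using that vnw cbas[OF vin(1)] unfolding \<psi>_def by auto
              have \<psi>ker: "y = 0" if y: "\<forall>b\<in>BB. \<psi> b y = 0" for y
              proof -
                have cv: "c v y = 0" using y vin(1) unfolding \<psi>_def by auto
                have "\<forall>b. c b y = 0"
                proof
                  fix b show "c b y = 0"
                  proof (cases "b \<in> BB")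
                    case True then have "\<psi> b y = 0" using y by auto
                    then show ?thesis using cv unfolding \<psi>_def by (auto split: if_splits)
                  next
                    case False then show ?thesis unfolding c_def using V.representation_ne_zero by blast
                  qed
                qed
                then have "{b. V.representation BB y b \<noteq> 0} = {}" unfolding c_def by auto
                then show "y = 0" using V.sum_nonzero_representation_eq[OF BB(3), of y] spBB by simp
              qed
              define \<Phi> where "\<Phi> b t = (\<lambda>u. \<psi> b (t u))" for b and t :: "'u \<Rightarrow> 'v"
              have l\<Phi>: "Vector_Spaces.linear (fun_scale sV) (fun_scale (*)) (\<Phi> b)" for b
                unfolding \<Phi>_def by (rule lin_comp[OF V.vector_space_axioms K.vector_space_axioms l\<psi>])
              have count: "FV.dim S' \<le> (\<Sum>b\<in>BB. FK.dim (\<Phi> b ` S'))"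
              proof (rule P2.count_le[OF fBB _ S's fin(1) S'B])
                show "\<forall>b\<in>BB. Vector_Spaces.linear (fun_scale sV) (fun_scale (*)) (\<Phi> b)" using l\<Phi> by blast
                show "\<forall>t\<in>S'. (\<forall>b\<in>BB. \<Phi> b t = 0) \<longrightarrow> t = 0"
                proof (intro ballI impI)
                  fix t assume "t \<in> S'" "\<forall>b\<in>BB. \<Phi> b t = 0"
                  then have "\<forall>b\<in>BB. \<psi> b (t u) = 0" for u unfolding \<Phi>_def by (auto simp: fun_eq_iff)
                  then show "t = 0" using \<psi>ker by (auto simp: fun_eq_iff)
                qed
              qed
              have LZ: "FK.subspace {f. Vector_Spaces.linear sU (*) f \<and> (\<forall>z\<in>Z'. f z = 0)}"
                by (rule sub_lin[OF U.vector_space_axioms K.vector_space_axioms])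
              have \<Phi>S'_in: "\<Phi> b ` S' \<subseteq> {f. Vector_Spaces.linear sU (*) f \<and> (\<forall>z\<in>Z'. f z = 0)}" for b
              proof
                fix f assume "f \<in> \<Phi> b ` S'"
                then obtain t where t: "t \<in> S'" "f = \<Phi> b t" by auto
                have "Vector_Spaces.linear sU (*) (\<psi> b \<circ> t)"
                  using Vector_Spaces.linear_compose[of sU sV t "(*)" "\<psi> b"] lS' t l\<psi> by auto
                moreover have "\<psi> b \<circ> t = f" unfolding t \<Phi>_def by auto
                moreover have "f z = 0" if "z \<in> Z'" for z
                  using lS' t that VK.linear_0[OF l\<psi>] unfolding \<Phi>_def by auto
                ultimately show "f \<in> {f. Vector_Spaces.linear sU (*) f \<and> (\<forall>z\<in>Z'. f z = 0)}" by auto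
              qed
              have \<Phi>B: "\<Phi> b ` S' \<subseteq> FK.span (\<Phi> b ` B0)" for b
                using S'B P2.linear_span_image[OF l\<Phi>[of b], of B0] by auto
              have \<Phi>S's: "FK.subspace (\<Phi> b ` S')" for b
                using P2.linear_subspace_image[OF l\<Phi> S's] .
              have fB0: "finite (\<Phi> b ` B0)" for b using fin(1) by simp
              have bnd_w: "FK.dim (\<Phi> b ` S') \<le> n'" for b
                using dimD[OF U fdK Z's \<Phi>S's[of b] _ fB0 \<Phi>B] \<Phi>S'_in dimK unfolding n'_def by auto
              have bnd: "FK.dim (\<Phi> b ` S') + 1 \<le> n'" if b: "b \<in> BB" "b \<noteq> w" for b
              proof -
                define \<phi> where "\<phi> = \<Phi> b (- s)"
                have n\<phi>: "\<phi> \<notin> \<Phi> b ` S'"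
                proof
                  assume "\<phi> \<in> \<Phi> b ` S'"
                  then obtain t where t: "t \<in> S'" "\<Phi> b t = \<Phi> b (- s)" unfolding \<phi>_def by auto
                  have tS: "t \<in> S" using t S'_def by auto
                  have st: "s + t \<in> S" using FV.subspace_add Ss s tS by blast
                  have "H (s + t) = v" using Hadd[OF s tS] H0 t(1) v_def by simp
                  then obtain y where y: "v = (s + t) y" using Hrc[OF st] by auto
                  have e1: "\<psi> b (t y) = \<psi> b (- s y)" using fun_cong[OF t(2), of y] unfolding \<Phi>_def by simp
                  have "\<psi> b v = \<psi> b (s y) + \<psi> b (t y)" using y VK.linear_add[OF l\<psi>] by simp
                  also have "\<dots> = \<psi> b (s y) + \<psi> b (- s y)" using e1 by simp
                  also have "\<dots> = 0" using VK.linear_neg[OF l\<psi>] by simp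
                  finally show False using \<psi>v b by simp
                qed
                have \<phi>L: "\<phi> \<in> {f. Vector_Spaces.linear sU (*) f \<and> (\<forall>z\<in>Z'. f z = 0)}"
                proof -
                  have ls: "Vector_Spaces.linear sU sV s" using lS s by auto
                  have lns: "Vector_Spaces.linear sU sV (\<lambda>u. - s u)" using UV.linear_compose_neg[OF ls] .
                  have l\<phi>: "Vector_Spaces.linear sU (*) \<phi>"
                    using Vector_Spaces.linear_compose[OF lns l\<psi>[of b]]
                    unfolding \<phi>_def \<Phi>_def by (simp add: o_def)
                  have z0: "\<phi> z = 0" if "z \<in> insert x0 Z" for z
                  proof (cases "z = x0")
                    case True
                    then have "\<phi> z = \<psi> b (- w)" unfolding \<phi>_def \<Phi>_def w_def by simp
                    also have "\<dots> = - \<psi> b w" using VK.linear_neg[OF l\<psi>] by simp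
                    finally show ?thesis using \<psi>w b by simp
                  next
                    case False
                    then have "z \<in> Z" using that by auto
                    then have "s z = 0" using lS s by auto
                    then show ?thesis unfolding \<phi>_def \<Phi>_def using VK.linear_0[OF l\<psi>] by simp
                  qed
                  have "\<forall>z\<in>Z'. \<phi> z = 0"
                    using UK.linear_eq_0_on_span[OF l\<phi> z0] unfolding Z'_def by blast
                  then show ?thesis using l\<phi> by simp
                qed
                define D where "D = FK.span (insert \<phi> (\<Phi> b ` S'))"
                have dD: "FK.dim D = FK.dim (\<Phi> b ` S') + 1"
                  unfolding D_def by (rule FK.dim_insert_fd[OF \<Phi>S's fB0 \<Phi>B n\<phi>])
                have DL: "D \<subseteq> {f. Vector_Spaces.linear sU (*) f \<and> (\<forall>z\<in>Z'. f z = 0)}"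
                  unfolding D_def by (rule FK.span_minimal[OF _ LZ]) (use \<phi>L \<Phi>S'_in[of b] in auto)
                have "insert \<phi> (\<Phi> b ` S') \<subseteq> FK.span (insert \<phi> (\<Phi> b ` B0))"
                  using \<Phi>B[of b] FK.span_mono[of "\<Phi> b ` B0" "insert \<phi> (\<Phi> b ` B0)"]
                    FK.span_base[of \<phi> "insert \<phi> (\<Phi> b ` B0)"] by blast
                then have DB: "D \<subseteq> FK.span (insert \<phi> (\<Phi> b ` B0))"
                  unfolding D_def by (intro FK.span_minimal) simp_all
                have Ds: "FK.subspace D" unfolding D_def by simp
                have DL': "\<forall>f\<in>D. Vector_Spaces.linear sU (*) f \<and> (\<forall>z\<in>Z'. f z = 0)" using DL by blast
                have fB': "finite (insert \<phi> (\<Phi> b ` B0))" using fB0[of b] by simp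
                have "FK.dim D \<le> (U.dim UNIV - U.dim Z') * K.dim UNIV"
                  using dimD[OF U fdK Z's Ds DL' fB' DB] .
                then have "FK.dim D \<le> n' * 1" using dimK unfolding n'_def by simp
                then show ?thesis using dD by simp
              qed
              define g where "g b = FK.dim (\<Phi> b ` S')" for b
              have "(\<Sum>b\<in>BB-{w}. g b + 1) \<le> (\<Sum>b\<in>BB-{w}. n')"
                by (rule sum_mono) (use bnd in \<open>auto simp: g_def\<close>)
              then have s1: "(\<Sum>b\<in>BB-{w}. g b) + card (BB-{w}) \<le> card (BB-{w}) * n'"
                using sum.distrib[of g "\<lambda>_. 1" "BB-{w}"] by simp
              have s2: "(\<Sum>b\<in>BB. g b) = g w + (\<Sum>b\<in>BB-{w}. g b)"
                using sum.remove[OF fBB vin(2)] .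
              have cpos: "card BB > 0" using fBB vin(2) card_gt_0_iff by blast
              have cm: "card (BB - {w}) + 1 = m" using cBB fBB vin(2) cpos by (simp add: card_Diff_singleton)
              have gw: "g w \<le> n'" using bnd_w g_def by simp
              have "FV.dim S' \<le> (\<Sum>b\<in>BB. g b)" using count g_def by simp
              then have "n' * m + 2 \<le> g w + (\<Sum>b\<in>BB-{w}. g b) + m" using cdS' s2 by simp
              moreover have "n' * m = card (BB - {w}) * n' + n'" using cm[symmetric] by simp
              ultimately show False using s1 gw cm by linarith
            qed
          qed
          obtain B2 where B2: "B2 \<subseteq> W" "V.independent B2" "W \<subseteq> V.span B2" "card B2 = V.dim W"
            by (rule V.basis_exists)
          have fB2: "finite B2" using V.finiteI_independent B2(2) .
          have "B2 \<noteq> {}"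
          proof
            assume "B2 = {}"
            then have c0: "card B2 = 0" by simp
            show False using dW2 B2(4) c0 by linarith
          qed
          then obtain a where a: "a \<in> B2" by blast
          have "card (B2 - {a}) \<ge> 1" using dW2 B2(4) fB2 a by (simp add: card_Diff_singleton)
          then have "B2 - {a} \<noteq> {}" by (metis card.empty not_one_le_zero)
          then obtain b where b: "b \<in> B2" "b \<noteq> a" by blast
          obtain s1 where s1: "s1 \<in> S" "s1 x0 = a" using a B2(1) W_def by auto
          obtain s2 where s2: "s2 \<in> S" "s2 x0 = b" using b B2(1) W_def by auto
          have i12: "ind2 (s1 x0) (s2 x0)"
            unfolding ind2_def s1(2) s2(2)
            by (rule V.indep2_of_independent[OF V.independent_mono[OF B2(2)]]) (use a b in auto)
          have P: "\<alpha> = \<beta>" if st: "s \<in> S" "t \<in> S" and i: "ind2 (s x0) (t x0)"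
            and e: "H s = sV \<alpha> (s x0)" "H t = sV \<beta> (t x0)" for s t \<alpha> \<beta>
          proof -
            have "s + t \<in> S" using FV.subspace_add Ss st by blast
            then obtain \<gamma> where "H (s + t) = sV \<gamma> ((s + t) x0)" using L by blast
            then have "sV \<gamma> (s x0 + t x0) = sV \<alpha> (s x0) + sV \<beta> (t x0)"
              using Hadd[OF st] e by simp
            then show ?thesis using V.indep2_coeff i unfolding ind2_def by blast
          qed
          obtain lam where lam: "H s1 = sV lam (s1 x0)" using L s1(1) by blast
          obtain bet where bet: "H s2 = sV bet (s2 x0)" using L s2(1) by blast
          have lb: "lam = bet" using P[OF s1(1) s2(1) i12 lam bet] .
          have all: "H s = sV lam (s x0)" if s: "s \<in> S" for s
          proof -
            obtain c where c: "H s = sV c (s x0)" using L s by blast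
            consider (z) "s x0 = 0" | (i1) "ind2 (s x0) (s1 x0)" | (o) "s x0 \<noteq> 0" "\<not> ind2 (s x0) (s1 x0)"
              by blast
            then show ?thesis
            proof cases
              case z then show ?thesis using c by simp
            next
              case i1 then show ?thesis using P[OF s s1(1) i1 c lam] c by simp
            next
              case o
              have "ind2 (s x0) (s2 x0)"
                using V.indep2_trans[OF o(1) o(2)[unfolded ind2_def] i12[unfolded ind2_def]]
                unfolding ind2_def .
              then show ?thesis using P[OF s s2(1) _ c bet] c lb by simp
            qed
          qed
          show "is_local S F" unfolding is_local_def
          proof (intro exI[of _ "sU lam x0 + x'"] ballI)
            fix s assume s: "s \<in> S"
            have ls: "Vector_Spaces.linear sU sV s" using lS s by auto
            have "F s = H s + s x'" unfolding H_def by simp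
            also have "\<dots> = sV lam (s x0) + s x'" using all[OF s] by simp
            also have "\<dots> = s (sU lam x0 + x')"
              using UV.linear_add[OF ls] UV.linear_scale[OF ls] by simp
            finally show "F s = s (sU lam x0 + x')" .
          qed
        qed
      qed
    qed }
  then show ?thesis using Z S lin fin codim add rc by blast
qed


theorem theorem1p5:
  fixes scaleU :: "'k::field \<Rightarrow> 'u::ab_group_add \<Rightarrow> 'u"
    and scaleV :: "'k \<Rightarrow> 'v::ab_group_add \<Rightarrow> 'v"
    and BU :: "'u set" and BV :: "'v set"
    and S :: "('u \<Rightarrow> 'v) set"
    and F :: "('u \<Rightarrow> 'v) \<Rightarrow> 'v"
  assumes U: "finite_dimensional_vector_space scaleU BU"
    and V: "finite_dimensional_vector_space scaleV BV"
    and S_lin: "S \<subseteq> lin_maps scaleU scaleV"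
    and S_sub: "module.subspace (fun_scale scaleV) S"
    and codim: "vector_space.dim scaleU (UNIV :: 'u set) * vector_space.dim scaleV (UNIV :: 'v set) + 2
                \<le> vector_space.dim (fun_scale scaleV) S + vector_space.dim scaleV (UNIV :: 'v set)"
    and F_hom: "additive_on S F"
    and F_rc: "range_compatible S F"
  shows "is_local S F"
proof -
  interpret U: finite_dimensional_vector_space scaleU BU by fact
  interpret V: finite_dimensional_vector_space scaleV BV by fact
  interpret FV: vector_space "fun_scale scaleV" using vs_fun V.vector_space_axioms .
  interpret UV: vector_space_pair scaleU scaleV ..
  have lin: "\<forall>s\<in>S. Vector_Spaces.linear scaleU scaleV s \<and> (\<forall>z\<in>{0}. s z = 0)"
    using S_lin UV.linear_0 unfolding lin_maps_def by auto
  have Z0: "U.subspace {0}" by simp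
  have d0: "U.dim {0::'u} = 0" using U.dim_le_0[of "{0}"] by simp
  obtain B0 where B0: "finite B0" "S \<subseteq> FV.span B0"
  proof (cases "U.dim (UNIV :: 'u set) = 0")
    case True
    then have "(UNIV :: 'u set) \<subseteq> {0}" using U.dim_eq_0[of UNIV] by (simp only:)
    then have x0: "x = 0" for x :: 'u by auto
    have "\<forall>s\<in>S. s = 0"
    proof
      fix s assume "s \<in> S"
      then have "s 0 = 0" using lin by auto
      show "s = 0"
      proof (rule ext)
        fix x :: 'u
        have "x = 0" by (rule x0)
        then show "s x = 0 x" using \<open>s 0 = 0\<close> by simp
      qed
    qed
    then have "S \<subseteq> FV.span {}" by auto
    then show ?thesis using that by blast
  next
    case False
    have "V.dim (UNIV :: 'v set) \<le> U.dim (UNIV :: 'u set) * V.dim (UNIV :: 'v set)"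
      using False by simp
    then have "2 \<le> FV.dim S" using codim by linarith
    obtain B where B: "B \<subseteq> S" "FV.independent B" "S \<subseteq> FV.span B" "card B = FV.dim S"
      by (rule FV.basis_exists)
    have "finite B" using B(4) \<open>2 \<le> FV.dim S\<close> by (metis card.infinite not_numeral_le_zero)
    then show ?thesis using that B(3) by blast
  qed
  show ?thesis
    by (rule GT[OF U V Z0 S_sub lin B0 _ F_hom F_rc]) (use codim d0 in simp)
qed

end
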